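(* Let $M\geq 1$ and let $r$ be a DSIC mechanism in the bilateral cooperation model described in the context, with competitive ratio $\alpha$. For $d\in\{1,\dots,M\}$ let $B^d$ be the set of vectors $b\in\mathbb{R}^M$ with $b_i=1$ for $i\in\{1,\dots,d\}$ and $b_i\leq 0$ for $i\in\{d+1,\dots,M\}$. For $\varepsilon\in(0,1)$ let $s^\varepsilon\in\mathbb{R}^M$ be given by $s^\varepsilon_i=\varepsilon^{M-i}$. Then for every $d\in\{1,\dots,M\}$, every $b\in B^d$ and every $\varepsilon\in(0,1)$: $$\sum_{i=1}^d r_i(b,s^\varepsilon)\ \geq\ d\cdot(\alpha-2\varepsilon).$$
   Context: Bilateral cooperation model: there are two agents, a buyer and a seller, and options $0,1,\dots,M$. A buyer utility vector is $b=(b_1,\dots,b_M)\in\mathbb{R}^M$ and a seller utility vector is $s=(s_1,\dots,s_M)\in\mathbb{R}^M$ (entries may be positive, zero or negative); by convention $b_0=s_0=0$. Define $\mathrm{Feasible}(b,s)=\{i\in\{0,\dots,M\}: b_i\geq 0 \text{ and } s_i\geq 0\}$ and $OPT(b,s)=\max_{i\in \mathrm{Feasible}(b,s)}(b_i+s_i)$. A mechanism is a function $r$ mapping each pair of reported vectors $(b',s')$ to a probability vector $(r_0(b',s'),\dots,r_M(b',s'))$. The mechanism $r$ is DSIC if for all $b,b',s,s'\in\mathbb{R}^M$: $\sum_{i=1}^M r_i(b,s')\,b_i\geq \sum_{i=1}^M r_i(b',s')\,b_i$ and $\sum_{i=1}^M r_i(b',s)\,s_i\geq \sum_{i=1}^M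 r_i(b',s')\,s_i$. The gain at true vectors $(b,s)$ is $G_r(b,s)=\sum_{i=1}^M r_i(b,s)(b_i+s_i)$, and the competitive ratio is $C_r=\min_{b,s} G_r(b,s)/OPT(b,s)$; "competitive ratio $\alpha$" means $C_r=\alpha$. *)

theory Defs
  imports Complex_Main
begin

text \<open>Vectors in R^M are represented as functions nat => real indexed by 1..M,
  with value 0 outside 1..M (in particular at index 0, matching b_0 = s_0 = 0).\<close>
definition vecs :: "nat \<Rightarrow> (nat \<Rightarrow> real) set" where
  "vecs M = {v. \<forall>i. i \<notin> {1..M} \<longrightarrow> v i = 0}"

definition Feasible :: "nat \<Rightarrow> (nat \<Rightarrow> real) \<Rightarrow> (nat \<Rightarrow> real) \<Rightarrow> nat set" where
  "Feasible M b s = {i \<in> {0..M}. b i \<ge> 0 \<and> s i \<ge> 0}"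

definition OPT :: "nat \<Rightarrow> (nat \<Rightarrow> real) \<Rightarrow> (nat \<Rightarrow> real) \<Rightarrow> real" where
  "OPT M b s = Max ((\<lambda>i. b i + s i) ` Feasible M b s)"

type_synonym mechanism = "(nat \<Rightarrow> real) \<Rightarrow> (nat \<Rightarrow> real) \<Rightarrow> nat \<Rightarrow> real"

definition is_mechanism :: "nat \<Rightarrow> mechanism \<Rightarrow> bool" where
  "is_mechanism M r \<longleftrightarrow> (\<forall>b\<in>vecs M. \<forall>s\<in>vecs M.
      (\<forall>i\<in>{0..M}. r b s i \<ge> 0) \<and> (\<Sum>i=0..M. r b s i) = 1)"

definition DSIC :: "nat \<Rightarrow> mechanism \<Rightarrow> bool" where
  "DSIC M r \<longleftrightarrow> (\<forall>b\<in>vecs M. \<forall>b'\<in>vecs M. \<forall>s\<in>vecs M. \<forall>s'\<in>vecs M.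
      (\<Sum>i=1..M. r b s' i * b i) \<ge> (\<Sum>i=1..M. r b' s' i * b i) \<and>
      (\<Sum>i=1..M. r b' s i * s i) \<ge> (\<Sum>i=1..M. r b' s' i * s i))"

definition gain :: "nat \<Rightarrow> mechanism \<Rightarrow> (nat \<Rightarrow> real) \<Rightarrow> (nat \<Rightarrow> real) \<Rightarrow> real" where
  "gain M r b s = (\<Sum>i=1..M. r b s i * (b i + s i))"

text \<open>C_r is the infimum of G_r(b,s)/OPT(b,s) over all true vectors with OPT(b,s) > 0
  (the ratio is undefined when OPT = 0); "competitive ratio alpha" means C_r = alpha,
  i.e. alpha is the greatest lower bound of these ratios.\<close>
definition competitive_ratio :: "nat \<Rightarrow> mechanism \<Rightarrow> real \<Rightarrow> bool" where
  "competitive_ratio M r \<alpha> \<longleftrightarrow>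
     (\<forall>b\<in>vecs M. \<forall>s\<in>vecs M. OPT M b s > 0 \<longrightarrow> \<alpha> \<le> gain M r b s / OPT M b s) \<and>
     (\<forall>\<beta>. (\<forall>b\<in>vecs M. \<forall>s\<in>vecs M. OPT M b s > 0 \<longrightarrow> \<beta> \<le> gain M r b s / OPT M b s)
            \<longrightarrow> \<beta> \<le> \<alpha>)"

definition Bd :: "nat \<Rightarrow> nat \<Rightarrow> (nat \<Rightarrow> real) set" where
  "Bd M d = {b \<in> vecs M. (\<forall>i\<in>{1..d}. b i = 1) \<and> (\<forall>i\<in>{d+1..M}. b i \<le> 0)}"

definition s_eps :: "nat \<Rightarrow> real \<Rightarrow> nat \<Rightarrow> real" where
  "s_eps M \<epsilon> i = (if i \<in> {1..M} then \<epsilon> ^ (M - i) else 0)"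

end

theory Submission
  imports Defs
begin

lemma mech_facts:
  assumes "is_mechanism M r" "b \<in> vecs M" "s \<in> vecs M"
  shows "\<forall>i\<in>{1..M}. 0 \<le> r b s i" "(\<Sum>i=1..M. r b s i) \<le> 1"
proof -
  have h: "(\<forall>i\<in>{0..M}. r b s i \<ge> 0) \<and> (\<Sum>i=0..M. r b s i) = 1"
    using assms unfolding is_mechanism_def by blast
  then show "\<forall>i\<in>{1..M}. 0 \<le> r b s i" by auto
  have e: "(\<Sum>i=0..M. r b s i) = r b s 0 + (\<Sum>i=Suc 0..M. r b s i)"
    by (rule sum.atLeast_Suc_atMost) simp
  have h0: "r b s 0 \<ge> 0" using h by auto
  have "(\<Sum>i=Suc 0..M. r b s i) \<le> 1" using e h0 h by linarith
  then show "(\<Sum>i=1..M. r b s i) \<le> 1" by simp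
qed

lemma opt_ge:
  assumes "i \<le> M" "b i \<ge> 0" "s i \<ge> 0"
  shows "b i + s i \<le> OPT M b s"
proof -
  have "finite (Feasible M b s)" unfolding Feasible_def by simp
  moreover have "i \<in> Feasible M b s" using assms unfolding Feasible_def by simp
  ultimately show ?thesis unfolding OPT_def by (intro Max_ge) auto
qed

lemma gain_ge:
  assumes "competitive_ratio M r \<alpha>" "b \<in> vecs M" "s \<in> vecs M" "OPT M b s > 0"
  shows "\<alpha> * OPT M b s \<le> gain M r b s"
proof -
  have "\<alpha> \<le> gain M r b s / OPT M b s" using assms unfolding competitive_ratio_def by blast
  then show ?thesis using assms(4) by (simp add: pos_le_divide_eq)
qed

lemma s_facts:
  assumes "0 < \<epsilon>" "\<epsilon> < 1" "d \<in> {1..M}"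
  shows "s_eps M \<epsilon> \<in> vecs M"
    and "\<forall>i\<in>{1..M}. 0 < s_eps M \<epsilon> i \<and> s_eps M \<epsilon> i \<le> 1"
    and "s_eps M \<epsilon> d = \<epsilon> ^ (M - d)"
    and "\<forall>i\<in>{1..M}. i < d \<longrightarrow> s_eps M \<epsilon> i \<le> \<epsilon> * \<epsilon> ^ (M - d)"
proof -
  show "s_eps M \<epsilon> \<in> vecs M" unfolding vecs_def s_eps_def by auto
  show "\<forall>i\<in>{1..M}. 0 < s_eps M \<epsilon> i \<and> s_eps M \<epsilon> i \<le> 1"
    using assms by (auto simp: s_eps_def power_le_one)
  show "s_eps M \<epsilon> d = \<epsilon> ^ (M - d)" using assms by (simp add: s_eps_def)
  show "\<forall>i\<in>{1..M}. i < d \<longrightarrow> s_eps M \<epsilon> i \<le> \<epsilon> * \<epsilon> ^ (M - d)"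
  proof (intro ballI impI)
    fix i assume i: "i \<in> {1..M}" "i < d"
    have "Suc (M - d) \<le> M - i" using i assms by auto
    then have "\<epsilon> ^ (M - i) \<le> \<epsilon> ^ Suc (M - d)"
      using assms by (intro power_decreasing) auto
    then show "s_eps M \<epsilon> i \<le> \<epsilon> * \<epsilon> ^ (M - d)" using i by (simp add: s_eps_def)
  qed
qed

lemma step:
  assumes mech: "is_mechanism M r" and dsic: "DSIC M r" and cr: "competitive_ratio M r \<alpha>"
    and e: "0 < \<epsilon>" "\<epsilon> < 1" and al: "\<alpha> > 2 * \<epsilon>"
    and d: "d \<in> {1..M}" and b: "b \<in> Bd M d"
  shows "\<exists>c. c \<in> Bd M (d - 1)
     \<and> (\<Sum>i=1..M. r b (s_eps M \<epsilon>) i * b i) \<ge> (\<Sum>i=1..M. r c (s_eps M \<epsilon>) i * c i) + r c (s_eps M \<epsilon>) d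
     \<and> r c (s_eps M \<epsilon>) d \<ge> \<alpha> - 3/2 * \<epsilon>
     \<and> (d = 1 \<longrightarrow> (\<Sum>i=1..M. r c (s_eps M \<epsilon>) i * c i) + r c (s_eps M \<epsilon>) d \<ge> \<alpha> - 3/2 * \<epsilon>)"
proof -
  define s where "s = s_eps M \<epsilon>"
  define m where "m = \<epsilon> ^ (M - d)"
  have svec: "s \<in> vecs M" and spos: "\<forall>i\<in>{1..M}. 0 < s i \<and> s i \<le> 1"
    and sd: "s d = m" and slow: "\<forall>i\<in>{1..M}. i < d \<longrightarrow> s i \<le> \<epsilon> * m"
    using s_facts[OF e d] unfolding s_def m_def by auto
  have mpos: "m > 0" unfolding m_def using e by simp
  have mle: "m \<le> 1" using spos sd d by auto
  have bvec: "b \<in> vecs M" and b1: "\<forall>i\<in>{1..d}. b i = 1" and b2: "\<forall>i\<in>{d+1..M}. b i \<le> 0"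
    using b unfolding Bd_def by auto
  define L where "L = 1 + 4 / (\<epsilon> * m) + (\<Sum>j=1..M. \<bar>b j\<bar>)"
  have Lb: "\<forall>j\<in>{1..M}. - L \<le> b j"
  proof
    fix j assume j: "j \<in> {1..M}"
    have "\<bar>b j\<bar> \<le> (\<Sum>j=1..M. \<bar>b j\<bar>)"
      using j by (intro member_le_sum) auto
    moreover have "4 / (\<epsilon> * m) \<ge> 0" using e mpos by simp
    ultimately show "- L \<le> b j" unfolding L_def by linarith
  qed
  have L1: "L \<ge> 1" and L4: "L * (\<epsilon> * m) \<ge> 4"
  proof -
    have sa: "(\<Sum>j=1..M. \<bar>b j\<bar>) \<ge> 0" by (intro sum_nonneg) auto
    have em: "\<epsilon> * m > 0" using e mpos by simp
    have q: "4 / (\<epsilon> * m) \<ge> 0" using em by simp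
    show "L \<ge> 1" unfolding L_def using sa q by linarith
    have "L \<ge> 4 / (\<epsilon> * m)" unfolding L_def using sa by linarith
    then have "L * (\<epsilon> * m) \<ge> 4 / (\<epsilon> * m) * (\<epsilon> * m)"
      using em by (intro mult_right_mono) auto
    moreover have "4 / (\<epsilon> * m) * (\<epsilon> * m) = 4" using e mpos by simp
    ultimately show "L * (\<epsilon> * m) \<ge> 4" by linarith
  qed
  define c where "c = (\<lambda>i. if i \<in> {1..M} then (if i < d then 1 else if i = d then 0 else - L) else (0::real))"
  define s2 where "s2 = (\<lambda>i. if i \<in> {1..M} then (if i = d then 1 else -2) else (0::real))"
  have cvec: "c \<in> vecs M" unfolding c_def vecs_def by auto
  have s2vec: "s2 \<in> vecs M" unfolding s2_def vecs_def by auto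
  have cB: "c \<in> Bd M (d - 1)" using cvec d L1 unfolding Bd_def c_def by auto
  define R where "R = r c s"
  define R2 where "R2 = r c s2"
  have R0: "\<forall>i\<in>{1..M}. 0 \<le> R i" and Rs: "(\<Sum>i=1..M. R i) \<le> 1"
    using mech_facts[OF mech cvec svec] unfolding R_def by auto
  have R20: "\<forall>i\<in>{1..M}. 0 \<le> R2 i"
    using mech_facts[OF mech cvec s2vec] unfolding R2_def by auto
  have Vstep: "(\<Sum>i=1..M. r b s i * b i) \<ge> (\<Sum>i=1..M. R i * c i) + R d"
  proof -
    have "(\<Sum>i=1..M. r b s i * b i) \<ge> (\<Sum>i=1..M. r c s i * b i)"
      using dsic bvec cvec svec unfolding DSIC_def by blast
    moreover have "(\<Sum>i=1..M. R i * b i) \<ge> (\<Sum>i=1..M. R i * c i + (if i = d then R i else 0))"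
    proof (rule sum_mono)
      fix i assume i: "i \<in> {1..M}"
      show "R i * c i + (if i = d then R i else 0) \<le> R i * b i"
      proof (cases "i \<le> d")
        case True
        then show ?thesis using i b1 unfolding c_def by auto
      next
        case False
        then have "c i \<le> b i" using i Lb unfolding c_def by auto
        then show ?thesis using False R0 i by (auto intro: mult_left_mono)
      qed
    qed
    moreover have "(\<Sum>i=1..M. R i * c i + (if i = d then R i else 0)) = (\<Sum>i=1..M. R i * c i) + R d"
      using d by (simp add: sum.distrib)
    ultimately show ?thesis unfolding R_def by linarith
  qed
  define T where "T = (\<Sum>i=1..M. if d < i then R i else 0)"
  define P where "P = (\<Sum>i=1..M. if i < d then R i else 0)"
  have T0: "T \<ge> 0" unfolding T_def using R0 by (intro sum_nonneg) auto
  have P0: "P \<ge> 0" unfolding P_def using R0 by (intro sum_nonneg) auto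
  have P1: "P \<le> 1"
  proof -
    have "P \<le> (\<Sum>i=1..M. R i)" unfolding P_def using R0 by (intro sum_mono) auto
    then show ?thesis using Rs by linarith
  qed
  have optc: "OPT M c s \<ge> m"
    using opt_ge[of d M c s] d sd mpos unfolding c_def by auto
  have gainc: "gain M r c s \<ge> \<alpha> * m"
  proof -
    have "\<alpha> * OPT M c s \<le> gain M r c s"
      using gain_ge[OF cr cvec svec] optc mpos by auto
    moreover have "\<alpha> * m \<le> \<alpha> * OPT M c s" using optc al e by (intro mult_left_mono) auto
    ultimately show ?thesis by linarith
  qed
  have gain_eq: "gain M r c s = (\<Sum>i=1..M. R i * c i) + (\<Sum>i=1..M. R i * s i)"
    unfolding gain_def R_def by (simp add: sum.distrib distrib_left)
  have LT: "L * T \<le> 2"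
  proof -
    have "gain M r c s \<le> (\<Sum>i=1..M. 2 * R i - L * (if d < i then R i else 0))"
      unfolding gain_def R_def[symmetric]
    proof (rule sum_mono)
      fix i assume i: "i \<in> {1..M}"
      show "R i * (c i + s i) \<le> 2 * R i - L * (if d < i then R i else 0)"
      proof (cases "d < i")
        case True
        have "s i \<le> 1" using i spos by auto
        then have "c i + s i \<le> 2 - L" using i True unfolding c_def by auto
        then have "R i * (c i + s i) \<le> R i * (2 - L)" using R0 i by (intro mult_left_mono) auto
        then show ?thesis using True by (simp add: algebra_simps)
      next
        case False
        have "s i \<le> 1" using i spos by auto
        then have "c i + s i \<le> 2" using i False unfolding c_def by auto
        then have "R i * (c i + s i) \<le> R i * 2" using R0 i by (intro mult_left_mono) auto
        then show ?thesis using False by (simp add: algebra_simps)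
      qed
    qed
    also have "\<dots> = 2 * (\<Sum>i=1..M. R i) - L * T"
      unfolding T_def by (simp add: sum_subtractf sum_distrib_left)
    finally have "gain M r c s \<le> 2 * (\<Sum>i=1..M. R i) - L * T" .
    moreover have "\<alpha> * m \<ge> 0" using al e mpos by simp
    ultimately show ?thesis using gainc Rs by linarith
  qed
  have Tb: "T \<le> \<epsilon> * m / 2"
  proof -
    have "T * (L * (\<epsilon> * m)) \<ge> T * 4" using T0 L4 by (intro mult_left_mono) auto
    moreover have "T * (L * (\<epsilon> * m)) = (L * T) * (\<epsilon> * m)" by (simp add: algebra_simps)
    moreover have "(L * T) * (\<epsilon> * m) \<le> 2 * (\<epsilon> * m)"
      using LT e mpos by (intro mult_right_mono) auto
    ultimately show ?thesis by linarith
  qed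
  have R2d: "R2 d \<ge> \<alpha>"
  proof -
    have opt2: "OPT M c s2 \<ge> 1"
      using opt_ge[of d M c s2] d unfolding c_def s2_def by auto
    have "\<alpha> * OPT M c s2 \<le> gain M r c s2"
      using gain_ge[OF cr cvec s2vec] opt2 by auto
    moreover have "\<alpha> * 1 \<le> \<alpha> * OPT M c s2" using opt2 al e by (intro mult_left_mono) auto
    moreover have "gain M r c s2 \<le> (\<Sum>i=1..M. if i = d then R2 i else 0)"
      unfolding gain_def R2_def[symmetric]
    proof (rule sum_mono)
      fix i assume i: "i \<in> {1..M}"
      show "R2 i * (c i + s2 i) \<le> (if i = d then R2 i else 0)"
      proof (cases "i = d")
        case True
        then show ?thesis using i unfolding c_def s2_def by auto
      next
        case False
        then have "c i + s2 i \<le> 0" using i L1 unfolding c_def s2_def by auto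
        then show ?thesis using False R20 i by (simp add: mult_nonneg_nonpos)
      qed
    qed
    moreover have "(\<Sum>i=1..M. if i = d then R2 i else 0) = R2 d" using d by simp
    ultimately show ?thesis by linarith
  qed
  have sell: "(\<Sum>i=1..M. R i * s i) \<ge> \<alpha> * m"
  proof -
    have "(\<Sum>i=1..M. R i * s i) \<ge> (\<Sum>i=1..M. R2 i * s i)"
      using dsic cvec svec s2vec unfolding DSIC_def R_def R2_def by blast
    moreover have "(\<Sum>i=1..M. R2 i * s i) \<ge> (\<Sum>i=1..M. if i = d then R2 i * m else 0)"
    proof (rule sum_mono)
      fix i assume i: "i \<in> {1..M}"
      show "(if i = d then R2 i * m else 0) \<le> R2 i * s i"
      proof -
        have "0 \<le> R2 i" "0 < s i" using i R20 spos by auto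
        then show ?thesis using sd by auto
      qed
    qed
    moreover have "(\<Sum>i=1..M. if i = d then R2 i * m else 0) = R2 d * m" using d by simp
    moreover have "R2 d * m \<ge> \<alpha> * m" using R2d mpos by (intro mult_right_mono) auto
    ultimately show ?thesis by linarith
  qed
  have supper: "(\<Sum>i=1..M. R i * s i) \<le> \<epsilon> * m * P + m * R d + T"
  proof -
    have "(\<Sum>i=1..M. R i * s i) \<le> (\<Sum>i=1..M. \<epsilon> * m * (if i < d then R i else 0)
          + (if i = d then m * R i else 0) + (if d < i then R i else 0))"
    proof (rule sum_mono)
      fix i assume i: "i \<in> {1..M}"
      consider "i < d" | "i = d" | "d < i" by linarith
      then show "R i * s i \<le> \<epsilon> * m * (if i < d then R i else 0)
          + (if i = d then m * R i else 0) + (if d < i then R i else 0)"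
      proof cases
        case 1
        then have "R i * s i \<le> R i * (\<epsilon> * m)" using i R0 slow by (intro mult_left_mono) auto
        then show ?thesis using 1 by (simp add: algebra_simps)
      next
        case 2
        then show ?thesis using sd by (simp add: algebra_simps)
      next
        case 3
        have "s i \<le> 1" "0 \<le> R i" using i R0 spos by auto
        then have "R i * s i \<le> R i * 1" by (intro mult_left_mono) auto
        then show ?thesis using 3 by simp
      qed
    qed
    also have "\<dots> = \<epsilon> * m * P + m * R d + T"
      unfolding P_def T_def using d by (simp add: sum.distrib sum_distrib_left)
    finally show ?thesis .
  qed
  have Rd: "R d \<ge> \<alpha> - 3/2 * \<epsilon>"
  proof -
    have "\<epsilon> * m * P \<le> \<epsilon> * m" using P1 e mpos by (simp add: mult_left_le)
    then have "\<alpha> * m \<le> m * (R d + 3/2 * \<epsilon>)" using sell supper Tb by (simp add: algebra_simps)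
    then have "\<alpha> \<le> R d + 3/2 * \<epsilon>" using mpos by (simp add: mult.commute)
    then show ?thesis by linarith
  qed
  have d1: "d = 1 \<longrightarrow> (\<Sum>i=1..M. R i * c i) + R d \<ge> \<alpha> - 3/2 * \<epsilon>"
  proof
    assume d1: "d = 1"
    have "P = 0" unfolding P_def using d1 by simp
    then have "(\<Sum>i=1..M. R i * s i) \<le> m * R d + T" using supper by simp
    then have A: "(\<Sum>i=1..M. R i * c i) \<ge> \<alpha> * m - m * R d - T"
      using gainc gain_eq by linarith
    have "R d * (1 - m) \<ge> (\<alpha> - 3/2 * \<epsilon>) * (1 - m)"
      using Rd mle by (intro mult_right_mono) auto
    then have "(\<Sum>i=1..M. R i * c i) + R d \<ge> (\<alpha> - 3/2 * \<epsilon>) * (1 - m) + \<alpha> * m - T"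
      using A by (simp add: algebra_simps)
    moreover have "(\<alpha> - 3/2 * \<epsilon>) * (1 - m) + \<alpha> * m - T \<ge> \<alpha> - 3/2 * \<epsilon>"
    proof -
      have eq: "(\<alpha> - 3/2 * \<epsilon>) * (1 - m) + \<alpha> * m - T = \<alpha> - 3/2 * \<epsilon> + 3/2 * (\<epsilon> * m) - T"
        by (simp add: field_simps)
      have "\<epsilon> * m > 0" using e mpos by simp
      then show ?thesis using eq Tb by linarith
    qed
    ultimately show "(\<Sum>i=1..M. R i * c i) + R d \<ge> \<alpha> - 3/2 * \<epsilon>" by linarith
  qed
  show ?thesis
    using cB Vstep Rd d1 unfolding R_def s_def by blast
qed

theorem lemma2:
  fixes M :: nat and r :: mechanism and \<alpha> :: real
  assumes "M \<ge> 1"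
    and "is_mechanism M r"
    and "DSIC M r"
    and "competitive_ratio M r \<alpha>"
  shows "\<forall>d\<in>{1..M}. \<forall>b\<in>Bd M d. \<forall>\<epsilon>::real. 0 < \<epsilon> \<and> \<epsilon> < 1 \<longrightarrow>
           (\<Sum>i=1..d. r b (s_eps M \<epsilon>) i) \<ge> real d * (\<alpha> - 2 * \<epsilon>)"
proof (intro ballI allI impI)
  fix d b and \<epsilon> :: real
  assume d: "d \<in> {1..M}" and b: "b \<in> Bd M d" and e: "0 < \<epsilon> \<and> \<epsilon> < 1"
  define s where "s = s_eps M \<epsilon>"
  have svec: "s \<in> vecs M" unfolding s_def vecs_def s_eps_def by auto
  have bvec: "b \<in> vecs M" using b unfolding Bd_def by auto
  have r0: "\<forall>i\<in>{1..M}. 0 \<le> r b s i" using mech_facts[OF assms(2) bvec svec] by auto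
  show "(\<Sum>i=1..d. r b (s_eps M \<epsilon>) i) \<ge> real d * (\<alpha> - 2 * \<epsilon>)"
  proof (cases "\<alpha> \<le> 2 * \<epsilon>")
    case True
    have "(\<Sum>i=1..d. r b s i) \<ge> 0" using r0 d by (intro sum_nonneg) auto
    moreover have "real d * (\<alpha> - 2 * \<epsilon>) \<le> 0" using True by (simp add: mult_nonneg_nonpos)
    ultimately show ?thesis unfolding s_def by linarith
  next
    case False
    then have al: "\<alpha> > 2 * \<epsilon>" by simp
    define V where "V x = (\<Sum>i=1..M. r x s i * x i)" for x
    have key: "\<forall>b\<in>Bd M k. V b \<ge> real k * (\<alpha> - 2 * \<epsilon>)" if "1 \<le> k" "k \<le> M" for k
      using that
    proof (induction k)
      case 0
      then show ?case by simp
    next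
      case (Suc k)
      show ?case
      proof
        fix b assume b: "b \<in> Bd M (Suc k)"
        obtain c where c: "c \<in> Bd M k"
          "V b \<ge> V c + r c s (Suc k)"
          "r c s (Suc k) \<ge> \<alpha> - 3/2 * \<epsilon>"
          "Suc k = 1 \<longrightarrow> V c + r c s (Suc k) \<ge> \<alpha> - 3/2 * \<epsilon>"
          using step[OF assms(2) assms(3) assms(4) _ _ al, of "Suc k" b] e Suc.prems b
          unfolding V_def s_def by auto
        show "V b \<ge> real (Suc k) * (\<alpha> - 2 * \<epsilon>)"
        proof (cases "k = 0")
          case True
          then show ?thesis using c e by simp
        next
          case False
          then have "V c \<ge> real k * (\<alpha> - 2 * \<epsilon>)" using Suc.IH Suc.prems c(1) by auto
          then show ?thesis using c(2,3) e by (simp add: algebra_simps)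
        qed
      qed
    qed
    have Vb: "V b \<ge> real d * (\<alpha> - 2 * \<epsilon>)" using key[of d] d b by auto
    have "V b \<le> (\<Sum>i=1..M. if i \<le> d then r b s i else 0)"
      unfolding V_def
    proof (rule sum_mono)
      fix i assume i: "i \<in> {1..M}"
      show "r b s i * b i \<le> (if i \<le> d then r b s i else 0)"
      proof (cases "i \<le> d")
        case True
        then show ?thesis using b i unfolding Bd_def by auto
      next
        case False
        then have "b i \<le> 0" using b i unfolding Bd_def by auto
        then show ?thesis using False r0 i by (simp add: mult_nonneg_nonpos)
      qed
    qed
    also have "\<dots> = (\<Sum>i\<in>{1..M} \<inter> {i. i \<le> d}. r b s i)"
      by (simp add: sum.inter_restrict)
    also have "{1..M} \<inter> {i. i \<le> d} = {1..d}" using d by auto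
    finally show ?thesis using Vb unfolding s_def by linarith
  qed
qed

end
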